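(* Let $K>2$, let $n_1=1$, let $n_2>1$ be an integer, and let $n_3,\dots,n_K$ be positive integers. Let $\tau$ be the time of the first emptying event and $p$ the type emptied at time $\tau$. Then for every $t$ with $\Pr[\tau=t]>0$, \[ \Pr[p=1\mid \tau=t]\ \ge\ \Pr[p=2\mid \tau=t]. \]
   Context: Initial stocks $\vec n^{(0)}=(n_1,\dots,n_K)$ of $K$ goodie types evolve as follows: at each step $t=1,2,\dots$, as long as at least two coordinates of $\vec n^{(t-1)}$ are nonzero, an index $i$ is chosen uniformly at random (independently of the past) among the indices with $n_i^{(t-1)}>0$, and $\vec n^{(t)}=\vec n^{(t-1)}-\vec e_i$ ($\vec e_i$ the $i$-th standard unit vector). The time of the first emptying event is $\tau=\min\{t : \exists i \text{ with } n_i^{(t)}=0 \text{ and } n_i^{(0)}>0\}$; exactly one type is emptied at that step, and $p$ denotes that type. *)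

theory Defs
  imports "HOL-Analysis.Analysis"
begin

text \<open>Goodie types are indexed by 1..K; a stock vector is a function v :: nat => nat
  (values outside 1..K are irrelevant).  first_empty K v t i is the probability that,
  for the process started from stock vector v (one step = remove one item of a type chosen
  uniformly among the types with positive stock, performed as long as at least two types
  have positive stock), the first emptying event happens at step t and empties type i.
  Before the first emptying event the set of positive types does not change, so the
  recursion below (one-step analysis) restarts from the post-step state with the same
  set of initially positive types.\<close>

fun first_empty :: "nat \<Rightarrow> (nat \<Rightarrow> nat) \<Rightarrow> nat \<Rightarrow> nat \<Rightarrow> real" where
  "first_empty K v 0 i = 0"
| "first_empty K v (Suc t) i =
     (let A = {j \<in> {1..K}. 0 < v j} in
      if card A < 2 then 0
      else (\<Sum>j\<in>A. (if v j = 1 then (if t = 0 \<and> j = i then 1 else 0)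
                      else first_empty K (v(j := v j - 1)) t i)) / real (card A))"

definition tau_prob :: "nat \<Rightarrow> (nat \<Rightarrow> nat) \<Rightarrow> nat \<Rightarrow> real" where
  "tau_prob K v t = (\<Sum>i\<in>{1..K}. first_empty K v t i)"

end

theory Submission
  imports Defs
begin

lemma fe_le:
  assumes "K \<ge> 1" "v 1 = 1"
  shows "first_empty K v t i \<le> first_empty K v t 1"
  using assms(2)
proof (induction t arbitrary: v)
  case 0
  then show ?case by simp
next
  case (Suc t)
  define A where "A = {j \<in> {1..K}. 0 < v j}"
  have eq: "\<And>x. first_empty K v (Suc t) x = (if card A < 2 then 0 else
     (\<Sum>j\<in>A. (if v j = 1 then (if t = 0 \<and> j = x then 1 else 0)
                      else first_empty K (v(j := v j - 1)) t x)) / real (card A))"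
    by (simp only: first_empty.simps A_def Let_def)
  have fin: "finite A" unfolding A_def by simp
  have oneA: "1 \<in> A" using Suc.prems assms(1) unfolding A_def by simp
  show ?case
  proof (cases "card A < 2")
    case True
    then show ?thesis by (simp only: eq if_True)
  next
    case False
    have key: "(\<Sum>j\<in>A. (if v j = 1 then (if t = 0 \<and> j = i then 1 else 0)
                      else first_empty K (v(j := v j - 1)) t i))
       \<le> (\<Sum>j\<in>A. (if v j = 1 then (if t = 0 \<and> j = 1 then 1 else 0)
                      else first_empty K (v(j := v j - 1)) t 1))"
    proof (cases "t = 0")
      case True
      have "(\<Sum>j\<in>A. (if v j = 1 then (if t = 0 \<and> j = i then 1 else 0)
                      else first_empty K (v(j := v j - 1)) t i))
          \<le> (\<Sum>j\<in>A. (if j = i then 1 else 0::real))"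
        by (rule sum_mono) (simp add: True)
      also have "\<dots> \<le> 1" using fin by (simp add: sum.delta)
      also have "1 = (\<Sum>j\<in>A. (if j = 1 then 1 else 0::real))" using fin oneA by (simp add: sum.delta)
      also have "\<dots> = (\<Sum>j\<in>A. (if v j = 1 then (if t = 0 \<and> j = 1 then 1 else 0)
                      else first_empty K (v(j := v j - 1)) t 1))"
        using Suc.prems True by (intro sum.cong) auto
      finally show ?thesis .
    next
      case False
      show ?thesis
      proof (rule sum_mono)
        fix j assume "j \<in> A"
        show "(if v j = 1 then (if t = 0 \<and> j = i then 1 else 0)
                      else first_empty K (v(j := v j - 1)) t i)
            \<le> (if v j = 1 then (if t = 0 \<and> j = 1 then 1 else 0)
                      else first_empty K (v(j := v j - 1)) t 1)"
        proof (cases "v j = 1")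
          case True then show ?thesis using False by simp
        next
          case f2: False
          then have "j \<noteq> 1" using Suc.prems by auto
          then have "(v(j := v j - 1)) 1 = 1" using Suc.prems by simp
          then have "first_empty K (v(j := v j - 1)) t i \<le> first_empty K (v(j := v j - 1)) t 1"
            by (rule Suc.IH)
          then show ?thesis using f2 by simp
        qed
      qed
    qed
    show ?thesis using False key
      by (simp only: eq if_False) (simp add: divide_right_mono)
  qed
qed

theorem lemma11:
  fixes K :: nat and n :: "nat \<Rightarrow> nat" and t :: nat
  assumes "K > 2"
    and "n 1 = 1"
    and "n 2 > 1"
    and "\<forall>i\<in>{3..K}. n i > 0"
    and "tau_prob K n t > 0"
  shows "first_empty K n t 1 / tau_prob K n t \<ge> first_empty K n t 2 / tau_prob K n t"
proof -
  have "first_empty K n t 2 \<le> first_empty K n t 1"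
    by (rule fe_le) (use assms in auto)
  then show ?thesis using assms(5) by (simp add: divide_right_mono)
qed

end
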